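(* Consider the problem with $p=0$. Let Assumption 1 hold, let $\{\mathbf x_k\}$ be generated by Algorithm MADS-PIP, and let $\mathcal K^x_\rho\subseteq\mathcal K_\rho$ be the index set of an end-path subsequence with end-path point $\bar{\mathbf x}$. Assume that $f$ is Lipschitz continuous near $\bar{\mathbf x}$, that the sequence of poll direction sets $\{\mathcal D_k\}_{k\in\mathcal K^x_\rho}$ is dense in the unit sphere, and that $\bar{\mathbf x}\in\Omega$ satisfies the SCQ. Then $f^\circ(\bar{\mathbf x};\mathbf d)\ge0$ for all $\mathbf d\in\mathcal T^H_\Omega(\bar{\mathbf x})$.
   Context: Consider the problem of minimizing $f(\mathbf x)$ over $\mathbf x\in\mathbb R^n$ subject to $g_\ell(\mathbf x)\le 0$ ($\ell=1,\dots,m$), with $f,g_\ell:\mathbb R^n\to\mathbb R\cup\{+\infty\}$ (no equality constraints, $p=0$). The index set $\{1,\dots,m\}$ is partitioned into disjoint sets $\mathcal G^{int}$ and $\mathcal G^{ext}$, fixed throughout. Define $\Omega^{int}=\{\mathbf x: g_\ell(\mathbf x)\le 0\ \forall\ell\in\mathcal G^{int}\}$, $\Omega^{ext}=\{\mathbf x: g_\ell(\mathbf x)\le0\ \forall \ell\in\mathcal G^{ext}\}$, $\Omega=\Omega^{int}\cap\Omega^{ext}$. Let $\phi^{prox}(\mathbf x)=\max_{\ell\in\mathcal G^{int}}g_\ell(\mathbf x)$; $c^{int}(\mathbf x)=-\prod_{\ell\in\mathcal G^{int}}\min\{1,-g_\ell(\mathbf x)\}$ if $g_\ell(\mathbf x)\le0$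 for all $\ell\in\mathcal G^{int}$, and $c^{int}(\mathbf x)=\phi^{prox}(\mathbf x)$ otherwise; $c^{ext}(\mathbf x)=\sum_{\ell\in\mathcal G^{ext}}(\max\{0,g_\ell(\mathbf x)\})^2$. (If $\mathcal G^{int}=\emptyset$, then $c^{int}\equiv-1$ and $[\phi^{prox}]^2$ is read as $+\infty$.) For $\rho>0$ the merit function is $z(\mathbf x;\rho)=f(\mathbf x)-\rho\log(-c^{int}(\mathbf x))+\frac1\rho c^{ext}(\mathbf x)$ if $c^{int}(\mathbf x)<0$, and $+\infty$ otherwise. Algorithm MADS-PIP: inputs $\mathbf x_0$ with $g_\ell(\mathbf x_0)<0$ for all $\ell\in\mathcal G^{int}$ and $z(\mathbf x_0;\rho_0)<+\infty$, $\rho_0>0$, $\theta_\rho\in(0,1)$, $\Delta_0>0$, $\theta_\Delta\in(0,1)\cap\mathbb Q$, $\beta>1$. For $k=0,1,2,\dots$ (the algorithm never stops): mesh $\mathcal M_k=\{\mathbf x_k+\delta_k\mathbf u:\mathbf u\in\mathbb Z^n\}$ with $\delta_k=\min\{\Delta_k,\Delta_k^2/\Delta_0\}$; frame $\mathcal F_k=\{\mathbf x\in\mathcal M_k:\|\mathbf x-\mathbf x_k\|\le\Delta_k\}$. Search: a finite (possibly empty) set $\mathcal S_k\subset\mathcal M_k$ is examined; if some $\mathbf s\in\mathcal S_k$ satisfies $z(\mathbf s;\rho_k)<z(\mathbf x_k;\rho_k)$, set $\mathbf x_{k+1}=\mathbf s$, $\Delta_{k+1}=\Delta_k/\theta_\Delta$,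 $\rho_{k+1}=\rho_k$ (successful iteration). Otherwise poll: choose a finite set $\mathcal D_k$ of nonzero directions with $\mathbf x_k+\mathbf d\in\mathcal F_k$ for all $\mathbf d\in\mathcal D_k$; if some $\mathbf d\in\mathcal D_k$ satisfies $z(\mathbf x_k+\mathbf d;\rho_k)<z(\mathbf x_k;\rho_k)$, set $\mathbf x_{k+1}=\mathbf x_k+\mathbf d$, $\Delta_{k+1}=\Delta_k/\theta_\Delta$, $\rho_{k+1}=\rho_k$ (successful). Otherwise the iteration is unsuccessful: $\mathbf x_{k+1}=\mathbf x_k$, $\Delta_{k+1}=\theta_\Delta\Delta_k$, and $\rho_{k+1}=\theta_\rho\rho_k$ if $\Delta_{k+1}\le\min\{\rho_k^\beta,[\phi^{prox}(\mathbf x_k)]^2\}$, else $\rho_{k+1}=\rho_k$. The path-following index set is $\mathcal K_\rho=\{k:\rho_{k+1}<\rho_k\}$. A point $\bar{\mathbf x}$ is an end-path point if there is an infinite $\mathcal K_\rho^{x}\subseteq\mathcal K_\rho$ with $\lim_{k\in\mathcal K_\rho^x}\mathbf x_k=\bar{\mathbf x}$; $\{\mathbf x_k\}_{k\in\mathcal K^x_\rho}$ is then an end-path subsequence. Assumption 1: for every $\alpha\in\mathbb R$ the level set $\{\mathbf x\in\mathbb R^n: f(\mathbf x)\le\alpha\}$ is bounded. Clarke generalized directional derivative: $c^\circ(\mathbf x;\mathbf d)=\limsup_{\mathbf y\to\mathbf x,\ t\searrow0}\frac{c(\mathbf y+t\mathbf d)-c(\mathbf y)}{t}$. $\mathcal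 B(\mathbf x,\epsilon)$ is the ball of radius $\epsilon$ centred at $\mathbf x$. Density: for an infinite index set $\mathcal K$, the sequence $\{\mathcal D_k\}_{k\in\mathcal K}$ is dense in the unit sphere if for every unit vector $\bar{\mathbf d}$ there exist an infinite $\mathcal K^d\subseteq\mathcal K$ and $\mathbf d_k\in\mathcal D_k$ ($k\in\mathcal K^d$) with $\lim_{k\in\mathcal K^d}\mathbf d_k/\|\mathbf d_k\|=\bar{\mathbf d}$. Hypertangent cone: $\mathbf d$ is hypertangent to $\Omega$ at $\mathbf x$ if there is $\epsilon>0$ with $\mathbf y+t\mathbf w\in\Omega$ for all $\mathbf y\in\Omega\cap\mathcal B(\mathbf x,\epsilon)$, $\mathbf w\in\mathcal B(\mathbf d,\epsilon)$, $t\in(0,\epsilon)$; $\mathcal T^H_\Omega(\mathbf x)$ is the set of such vectors. Stationarity constraint qualification (SCQ): a point $\mathbf x\in\Omega$ satisfies SCQ if (a) $c^{int}$ and $c^{ext}$ are Lipschitz continuous near $\mathbf x$; (b) $(c^{int})^\circ(\mathbf x;\mathbf d)<0$ for every $\mathbf d\in\mathcal T^H_\Omega(\mathbf x)$; (c) for every $\mathbf d\in\mathcal T^H_\Omega(\mathbf x)$ there is $\epsilon>0$ such that $(c^{ext})^\circ(\mathbf y;\mathbf d)<0$ for all $\mathbf y\in\mathcal B(\mathbf x,\epsilon)\setminus\Omega^{ext}$. *)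

theory Defs
  imports "HOL-Analysis.Analysis" "HOL-Library.Liminf_Limsup"
begin

text \<open>Functions take values in the extended reals; the paper's codomain is
  the reals together with plus infinity, so minus infinity is excluded by
  hypotheses in the main theorem.\<close>

definition Omega_int :: "(nat \<Rightarrow> real^'n \<Rightarrow> ereal) \<Rightarrow> nat set \<Rightarrow> (real^'n) set" where
  "Omega_int g Gint = {x. \<forall>l\<in>Gint. g l x \<le> 0}"

definition Omega_ext :: "(nat \<Rightarrow> real^'n \<Rightarrow> ereal) \<Rightarrow> nat set \<Rightarrow> (real^'n) set" where
  "Omega_ext g Gext = {x. \<forall>l\<in>Gext. g l x \<le> 0}"

definition Omega :: "(nat \<Rightarrow> real^'n \<Rightarrow> ereal) \<Rightarrow> nat set \<Rightarrow> nat set \<Rightarrow> (real^'n) set" where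
  "Omega g Gint Gext = Omega_int g Gint \<inter> Omega_ext g Gext"

definition phi_prox :: "(nat \<Rightarrow> real^'n \<Rightarrow> ereal) \<Rightarrow> nat set \<Rightarrow> real^'n \<Rightarrow> ereal" where
  "phi_prox g Gint x = Max ((\<lambda>l. g l x) ` Gint)"

definition phi_prox_sq :: "(nat \<Rightarrow> real^'n \<Rightarrow> ereal) \<Rightarrow> nat set \<Rightarrow> real^'n \<Rightarrow> ereal" where
  "phi_prox_sq g Gint x = (if Gint = {} then \<infinity> else (phi_prox g Gint x)^2)"

definition c_int :: "(nat \<Rightarrow> real^'n \<Rightarrow> ereal) \<Rightarrow> nat set \<Rightarrow> real^'n \<Rightarrow> ereal" where
  "c_int g Gint x =
     (if \<forall>l\<in>Gint. g l x \<le> 0 then - (\<Prod>l\<in>Gint. min 1 (- g l x))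
      else phi_prox g Gint x)"

definition c_ext :: "(nat \<Rightarrow> real^'n \<Rightarrow> ereal) \<Rightarrow> nat set \<Rightarrow> real^'n \<Rightarrow> ereal" where
  "c_ext g Gext x = (\<Sum>l\<in>Gext. (max 0 (g l x))^2)"

definition merit :: "(real^'n \<Rightarrow> ereal) \<Rightarrow> (nat \<Rightarrow> real^'n \<Rightarrow> ereal) \<Rightarrow> nat set \<Rightarrow> nat set
                     \<Rightarrow> real \<Rightarrow> real^'n \<Rightarrow> ereal" where
  "merit f g Gint Gext \<rho> x =
     (if c_int g Gint x < 0
      then f x - ereal (\<rho> * ln (- real_of_ereal (c_int g Gint x))) + c_ext g Gext x / ereal \<rho>
      else \<infinity>)"

definition mesh_size :: "(nat \<Rightarrow> real) \<Rightarrow> nat \<Rightarrow> real" where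
  "mesh_size \<Delta> k = min (\<Delta> k) ((\<Delta> k)^2 / \<Delta> 0)"

definition mesh :: "(nat \<Rightarrow> real^'n) \<Rightarrow> (nat \<Rightarrow> real) \<Rightarrow> nat \<Rightarrow> (real^'n) set" where
  "mesh x \<Delta> k = {y. \<exists>u::real^'n. (\<forall>i. u $ i \<in> \<int>) \<and> y = x k + mesh_size \<Delta> k *\<^sub>R u}"

definition frame :: "(nat \<Rightarrow> real^'n) \<Rightarrow> (nat \<Rightarrow> real) \<Rightarrow> nat \<Rightarrow> (real^'n) set" where
  "frame x \<Delta> k = {y \<in> mesh x \<Delta> k. norm (y - x k) \<le> \<Delta> k}"

text \<open>A run of MADS-PIP: sequences of iterates x, frame sizes Delta, barrier
  parameters rho, search sets S and poll direction sets D.\<close>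
definition mads_pip_run ::
  "(real^'n \<Rightarrow> ereal) \<Rightarrow> (nat \<Rightarrow> real^'n \<Rightarrow> ereal) \<Rightarrow> nat set \<Rightarrow> nat set
   \<Rightarrow> real \<Rightarrow> real \<Rightarrow> real
   \<Rightarrow> (nat \<Rightarrow> real^'n) \<Rightarrow> (nat \<Rightarrow> real) \<Rightarrow> (nat \<Rightarrow> real)
   \<Rightarrow> (nat \<Rightarrow> (real^'n) set) \<Rightarrow> (nat \<Rightarrow> (real^'n) set) \<Rightarrow> bool" where
  "mads_pip_run f g Gint Gext \<theta>\<rho> \<theta>\<Delta> \<beta> x \<Delta> \<rho> S D \<longleftrightarrow>
     (\<forall>l\<in>Gint. g l (x 0) < 0) \<and> merit f g Gint Gext (\<rho> 0) (x 0) < \<infinity> \<and>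
     \<rho> 0 > 0 \<and> 0 < \<theta>\<rho> \<and> \<theta>\<rho> < 1 \<and> \<Delta> 0 > 0 \<and>
     0 < \<theta>\<Delta> \<and> \<theta>\<Delta> < 1 \<and> \<theta>\<Delta> \<in> \<rat> \<and> \<beta> > 1 \<and>
     (\<forall>k. finite (S k) \<and> S k \<subseteq> mesh x \<Delta> k \<and>
        (let zk = merit f g Gint Gext (\<rho> k) in
         if \<exists>s\<in>S k. zk s < zk (x k) then
           x (Suc k) \<in> S k \<and> zk (x (Suc k)) < zk (x k) \<and>
           \<Delta> (Suc k) = \<Delta> k / \<theta>\<Delta> \<and> \<rho> (Suc k) = \<rho> k
         else
           finite (D k) \<and> 0 \<notin> D k \<and> (\<forall>d\<in>D k. x k + d \<in> frame x \<Delta> k) \<and>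
           (if \<exists>d\<in>D k. zk (x k + d) < zk (x k) then
              (\<exists>d\<in>D k. zk (x k + d) < zk (x k) \<and> x (Suc k) = x k + d) \<and>
              \<Delta> (Suc k) = \<Delta> k / \<theta>\<Delta> \<and> \<rho> (Suc k) = \<rho> k
            else
              x (Suc k) = x k \<and> \<Delta> (Suc k) = \<theta>\<Delta> * \<Delta> k \<and>
              \<rho> (Suc k) = (if ereal (\<Delta> (Suc k)) \<le> min (ereal (\<rho> k powr \<beta>)) (phi_prox_sq g Gint (x k))
                            then \<theta>\<rho> * \<rho> k else \<rho> k))))"

definition K_rho :: "(nat \<Rightarrow> real) \<Rightarrow> nat set" where
  "K_rho \<rho> = {k. \<rho> (Suc k) < \<rho> k}"

definition conv_along :: "(nat \<Rightarrow> 'a::metric_space) \<Rightarrow> nat set \<Rightarrow> 'a \<Rightarrow> bool" where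
  "conv_along s K a \<longleftrightarrow> (\<forall>e>0. \<exists>N. \<forall>k\<in>K. k \<ge> N \<longrightarrow> dist (s k) a < e)"

definition end_path_subsequence :: "(nat \<Rightarrow> real^'n) \<Rightarrow> (nat \<Rightarrow> real) \<Rightarrow> nat set \<Rightarrow> real^'n \<Rightarrow> bool" where
  "end_path_subsequence x \<rho> K xbar \<longleftrightarrow> K \<subseteq> K_rho \<rho> \<and> infinite K \<and> conv_along x K xbar"

definition dense_poll :: "(nat \<Rightarrow> (real^'n) set) \<Rightarrow> nat set \<Rightarrow> bool" where
  "dense_poll D K \<longleftrightarrow>
     (\<forall>dbar::real^'n. norm dbar = 1 \<longrightarrow>
        (\<exists>Kd dk. Kd \<subseteq> K \<and> infinite Kd \<and> (\<forall>k\<in>Kd. dk k \<in> D k) \<and>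
                 conv_along (\<lambda>k. dk k /\<^sub>R norm (dk k)) Kd dbar))"

definition lipschitz_near :: "(real^'n \<Rightarrow> ereal) \<Rightarrow> real^'n \<Rightarrow> bool" where
  "lipschitz_near c x \<longleftrightarrow>
     (\<exists>\<epsilon>>0. \<exists>L. \<forall>y\<in>ball x \<epsilon>. \<forall>w\<in>ball x \<epsilon>.
        \<exists>a b. c y = ereal a \<and> c w = ereal b \<and> \<bar>a - b\<bar> \<le> L * dist y w)"

definition clarke_dd :: "(real^'n \<Rightarrow> ereal) \<Rightarrow> real^'n \<Rightarrow> real^'n \<Rightarrow> ereal" where
  "clarke_dd c x d =
     Limsup (nhds x \<times>\<^sub>F at_right 0) (\<lambda>(y, t). (c (y + t *\<^sub>R d) - c y) / ereal t)"

definition hypertangent :: "(real^'n) set \<Rightarrow> real^'n \<Rightarrow> (real^'n) set" where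
  "hypertangent \<Omega> x =
     {d. \<exists>\<epsilon>>0. \<forall>y\<in>\<Omega> \<inter> ball x \<epsilon>. \<forall>w\<in>ball d \<epsilon>. \<forall>t. 0 < t \<and> t < \<epsilon> \<longrightarrow> y + t *\<^sub>R w \<in> \<Omega>}"

definition SCQ :: "(nat \<Rightarrow> real^'n \<Rightarrow> ereal) \<Rightarrow> nat set \<Rightarrow> nat set \<Rightarrow> real^'n \<Rightarrow> bool" where
  "SCQ g Gint Gext x \<longleftrightarrow>
     x \<in> Omega g Gint Gext \<and>
     lipschitz_near (c_int g Gint) x \<and> lipschitz_near (c_ext g Gext) x \<and>
     (\<forall>d\<in>hypertangent (Omega g Gint Gext) x. clarke_dd (c_int g Gint) x d < 0) \<and>
     (\<forall>d\<in>hypertangent (Omega g Gint Gext) x. \<exists>\<epsilon>>0.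
        \<forall>y\<in>ball x \<epsilon> - Omega_ext g Gext. clarke_dd (c_ext g Gext) y d < 0)"

end

theory Submission
  imports Defs
begin

lemma clarke_unpack:
  fixes c :: "real^'n \<Rightarrow> ereal"
  assumes "clarke_dd c x d < ereal e"
  shows "\<exists>r>0. \<exists>t0>0. \<forall>y\<in>ball x r. \<forall>t. 0<t \<and> t<t0 \<longrightarrow> (c (y + t *\<^sub>R d) - c y) / ereal t < ereal e"
proof -
  have "eventually (\<lambda>p. (\<lambda>(y,t). (c (y + t *\<^sub>R d) - c y) / ereal t) p < ereal e) (nhds x \<times>\<^sub>F at_right 0)"
    using Limsup_lessD[OF assms[unfolded clarke_dd_def]] by simp
  then obtain Pf Pg where P: "eventually Pf (nhds x)" "eventually Pg (at_right (0::real))"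
    "\<forall>y t. Pf y \<longrightarrow> Pg t \<longrightarrow> (c (y + t *\<^sub>R d) - c y) / ereal t < ereal e"
    unfolding eventually_prod_filter by auto
  from P(1) obtain r where r: "r>0" "\<forall>y. dist y x < r \<longrightarrow> Pf y" unfolding eventually_nhds_metric by auto
  from P(2) obtain b where b: "b>0" "\<forall>t>0. t < b \<longrightarrow> Pg t" unfolding eventually_at_right_field by auto
  have "\<forall>y\<in>ball x r. \<forall>t. 0<t \<and> t<b \<longrightarrow> (c (y + t *\<^sub>R d) - c y) / ereal t < ereal e"
    using r b P(3) by (auto simp: dist_commute)
  then show ?thesis using r(1) b(1) by blast
qed

lemma ereal_neg_gap: "(z::ereal) < 0 \<Longrightarrow> \<exists>a>0. z < ereal (-a)"
proof (cases z)
  case (real r)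
  assume "z < 0" then show ?thesis using real by (intro exI[of _ "- r / 2"]) auto
next
  case PInf
  assume "z < 0" then show ?thesis using PInf by auto
next
  case MInf
  then show ?thesis by (intro exI[of _ 1]) auto
qed

lemma lip_unpack:
  assumes "lipschitz_near c x"
  shows "\<exists>\<epsilon>>0. \<exists>L\<ge>0. \<forall>y\<in>ball x \<epsilon>. c y = ereal (real_of_ereal (c y)) \<and>
          (\<forall>w\<in>ball x \<epsilon>. \<bar>real_of_ereal (c y) - real_of_ereal (c w)\<bar> \<le> L * dist y w)"
proof -
  obtain \<epsilon> L where e: "\<epsilon>>0" and h: "\<forall>y\<in>ball x \<epsilon>. \<forall>w\<in>ball x \<epsilon>.
        \<exists>a b. c y = ereal a \<and> c w = ereal b \<and> \<bar>a - b\<bar> \<le> L * dist y w"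
    using assms unfolding lipschitz_near_def by blast
  have "\<forall>y\<in>ball x \<epsilon>. c y = ereal (real_of_ereal (c y)) \<and>
          (\<forall>w\<in>ball x \<epsilon>. \<bar>real_of_ereal (c y) - real_of_ereal (c w)\<bar> \<le> max L 0 * dist y w)"
  proof (intro ballI conjI)
    fix y assume y: "y \<in> ball x \<epsilon>"
    from h y y show "c y = ereal (real_of_ereal (c y))" by force
    fix w assume w: "w \<in> ball x \<epsilon>"
    from h y w obtain a b where "c y = ereal a" "c w = ereal b" "\<bar>a - b\<bar> \<le> L * dist y w" by blast
    moreover have "L * dist y w \<le> max L 0 * dist y w" by (simp add: mult_right_mono)
    ultimately show "\<bar>real_of_ereal (c y) - real_of_ereal (c w)\<bar> \<le> max L 0 * dist y w" by simp
  qed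
  then show ?thesis using e by (intro exI[of _ \<epsilon>]) (auto intro!: exI[of _ "max L 0"])
qed

lemma local_mono_global:
  fixes \<psi> :: "real \<Rightarrow> 'b::linorder"
  assumes T: "0 \<le> T"
  and loc: "\<forall>s\<in>{0..T}. \<exists>\<delta>>0. \<forall>a b. a\<in>{0..T} \<longrightarrow> b\<in>{0..T} \<longrightarrow> s - \<delta> < a \<longrightarrow> a \<le> b \<longrightarrow> b < s + \<delta> \<longrightarrow> \<psi> b \<le> \<psi> a"
  shows "\<psi> T \<le> \<psi> 0"
proof -
  define A where "A = {s\<in>{0..T}. \<forall>r\<in>{0..s}. \<psi> r \<le> \<psi> 0}"
  have A0: "0 \<in> A" using T by (auto simp: A_def)
  have bdd: "bdd_above A" by (auto simp: A_def bdd_above_def)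
  define \<sigma> where "\<sigma> = Sup A"
  have s0: "0 \<le> \<sigma>" using cSup_upper[OF A0 bdd] by (simp add: \<sigma>_def)
  have sT: "\<sigma> \<le> T" unfolding \<sigma>_def using A0 by (intro cSup_least) (auto simp: A_def)
  obtain \<delta> where d: "\<delta> > 0" and dl: "\<forall>a b. a\<in>{0..T} \<longrightarrow> b\<in>{0..T} \<longrightarrow> \<sigma> - \<delta> < a \<longrightarrow> a \<le> b \<longrightarrow> b < \<sigma> + \<delta> \<longrightarrow> \<psi> b \<le> \<psi> a"
  proof -
    have "\<sigma> \<in> {0..T}" using s0 sT by simp
    then show ?thesis using loc that by blast
  qed
  have "\<sigma> - \<delta> < Sup A" using d by (simp add: \<sigma>_def)
  then obtain r where r: "r \<in> A" "\<sigma> - \<delta> < r" using less_cSup_iff[OF _ bdd] A0 by blast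
  have rs: "r \<le> \<sigma>" using cSup_upper[OF r(1) bdd] by (simp add: \<sigma>_def)
  define s' where "s' = min T (\<sigma> + \<delta>/2)"
  have "s' \<in> A"
  proof -
    have "s' \<in> {0..T}" using s0 sT d by (auto simp: s'_def)
    moreover have "\<psi> r' \<le> \<psi> 0" if "r' \<in> {0..s'}" for r'
    proof (cases "r' \<le> r")
      case True then show ?thesis using r(1) that by (auto simp: A_def)
    next
      case False
      have "\<psi> r' \<le> \<psi> r" using dl[rule_format, of r r'] r False that rs d \<open>s' \<in> {0..T}\<close>
        by (auto simp: A_def s'_def)
      also have "\<psi> r \<le> \<psi> 0" using r(1) by (auto simp: A_def)
      finally show ?thesis .
    qed
    ultimately show ?thesis by (auto simp: A_def)
  qed
  then have "s' \<le> \<sigma>" using cSup_upper[OF _ bdd] by (simp add: \<sigma>_def)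
  then have "s' = T" using d by (auto simp: s'_def)
  then have "T \<in> A" using \<open>s' \<in> A\<close> by simp
  then show ?thesis using T by (auto simp: A_def)
qed

lemma LD:
  fixes c :: "'a::real_normed_vector \<Rightarrow> ereal" and p :: "'b \<Rightarrow> 'a"
  assumes "finite J"
  and "\<forall>j\<in>J. \<exists>r>0. \<exists>t0>0. \<forall>y\<in>ball u r. \<forall>\<tau>. 0<\<tau> \<and> \<tau><t0 \<longrightarrow> c (y + \<tau> *\<^sub>R p j) \<le> c y"
  shows "\<exists>r>0. \<exists>\<delta>>0. \<forall>y\<in>ball u r. \<forall>h. 0<h \<and> h<\<delta> \<longrightarrow> (\<forall>lm. (\<forall>j\<in>J. 0 \<le> lm j \<and> lm j \<le> 1) \<longrightarrow>
            c (y + h *\<^sub>R (\<Sum>j\<in>J. lm j *\<^sub>R p j)) \<le> c y)"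
  using assms
proof (induction J rule: finite_induct)
  case empty
  show ?case by (auto intro!: exI[of _ 1])
next
  case (insert q J)
  obtain r' \<delta>' where r': "r'>0" "\<delta>'>0" and IH: "\<forall>y\<in>ball u r'. \<forall>h. 0<h \<and> h<\<delta>' \<longrightarrow> (\<forall>lm. (\<forall>j\<in>J. 0 \<le> lm j \<and> lm j \<le> 1) \<longrightarrow>
            c (y + h *\<^sub>R (\<Sum>j\<in>J. lm j *\<^sub>R p j)) \<le> c y)"
    using insert.IH insert.prems by auto
  obtain rq tq where rq: "rq>0" "tq>0" and hq: "\<forall>y\<in>ball u rq. \<forall>\<tau>. 0<\<tau> \<and> \<tau><tq \<longrightarrow> c (y + \<tau> *\<^sub>R p q) \<le> c y"
    using insert.prems by auto
  define r where "r = min r' rq / 2"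
  define \<delta> where "\<delta> = min (min \<delta>' tq) (r / (norm (p q) + 1))"
  have r0: "r > 0" using r' rq by (simp add: r_def)
  have "r / (norm (p q) + 1) > 0" using r0 by (intro divide_pos_pos) (auto simp: add_nonneg_pos)
  then have d0: "\<delta> > 0" using r' rq by (simp add: \<delta>_def)
  have "\<forall>y\<in>ball u r. \<forall>h. 0<h \<and> h<\<delta> \<longrightarrow> (\<forall>lm. (\<forall>j\<in>insert q J. 0 \<le> lm j \<and> lm j \<le> 1) \<longrightarrow>
            c (y + h *\<^sub>R (\<Sum>j\<in>insert q J. lm j *\<^sub>R p j)) \<le> c y)"
  proof (intro ballI allI impI)
    fix y h and lm :: "'b \<Rightarrow> real"
    assume y: "y \<in> ball u r" and h: "0 < h \<and> h < \<delta>" and l: "\<forall>j\<in>insert q J. 0 \<le> lm j \<and> lm j \<le> 1"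
    define y1 where "y1 = y + (h * lm q) *\<^sub>R p q"
    have eq: "y + h *\<^sub>R (\<Sum>j\<in>insert q J. lm j *\<^sub>R p j) = y1 + h *\<^sub>R (\<Sum>j\<in>J. lm j *\<^sub>R p j)"
      using insert.hyps by (simp add: y1_def algebra_simps)
    have "norm ((h * lm q) *\<^sub>R p q) \<le> h * norm (p q)"
    proof -
      have "lm q * norm (p q) \<le> 1 * norm (p q)" using l by (intro mult_right_mono) auto
      then show ?thesis using l h by (auto simp: abs_mult mult.assoc intro!: mult_left_mono)
    qed
    also have "\<dots> \<le> \<delta> * norm (p q)" using h by (intro mult_right_mono) auto
    also have "\<dots> \<le> r / (norm (p q) + 1) * (norm (p q) + 1)"
      using d0 by (intro mult_mono) (auto simp: \<delta>_def)
    also have "\<dots> = r" 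
    proof -
      have "norm (p q) + 1 \<noteq> 0" by (metis norm_ge_zero add_nonneg_pos zero_less_one less_irrefl)
      then show ?thesis by simp
    qed
    finally have n1: "norm ((h * lm q) *\<^sub>R p q) \<le> r" .
    have "dist u y1 \<le> dist u y + norm ((h * lm q) *\<^sub>R p q)"
      unfolding y1_def by (metis dist_add_cancel dist_norm dist_triangle2 norm_minus_commute add_diff_cancel_left')
    also have "\<dots> < r + r" using y n1 by auto
    also have "\<dots> \<le> r'" by (simp add: r_def)
    finally have y1: "y1 \<in> ball u r'" by simp
    have "c (y1 + h *\<^sub>R (\<Sum>j\<in>J. lm j *\<^sub>R p j)) \<le> c y1"
      using IH y1 h l by (auto simp: \<delta>_def)
    also have "c y1 \<le> c y"
    proof (cases "lm q = 0")
      case True then show ?thesis by (simp add: y1_def)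
    next
      case False
      then have "0 < h * lm q" using l h by auto
      moreover have "h * lm q < tq"
      proof -
        have "h * lm q \<le> h" using l h by (auto intro: mult_left_le)
        moreover have "h < tq" using h by (simp add: \<delta>_def)
        ultimately show ?thesis by linarith
      qed
      moreover have "y \<in> ball u rq"
      proof -
        have "dist u y < min r' rq / 2" using y by (simp add: r_def)
        moreover have "min r' rq \<le> rq" by simp
        moreover have "0 \<le> dist u y" by simp
        ultimately have "dist u y < rq" by linarith
        then show ?thesis by simp
      qed
      ultimately show ?thesis using hq by (auto simp: y1_def)
    qed
    finally show "c (y + h *\<^sub>R (\<Sum>j\<in>insert q J. lm j *\<^sub>R p j)) \<le> c y" using eq by simp
  qed
  then show ?case using r0 d0 by blast
qed

lemma ereal_sq_nonneg: "0 \<le> (max 0 (a::ereal))^2"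
  by (cases a) (auto simp: power2_eq_square max_def)


definition pdir :: "real^'n \<Rightarrow> real \<Rightarrow> 'n \<times> bool \<Rightarrow> real^'n" where
  "pdir d s j = d + (if snd j then s else -s) *\<^sub>R axis (fst j) 1"

lemma pdir_dist: "norm (pdir d s j - d) = \<bar>s\<bar>"
  by (simp add: pdir_def)

lemma decomp:
  fixes d w :: "real^'n"
  assumes s: "s > 0" and wd: "norm (w - d) < s / real CARD('n)"
  shows "\<exists>lm. (\<forall>j. 0 \<le> lm j \<and> lm j \<le> 1) \<and> w = (\<Sum>j\<in>UNIV. lm j *\<^sub>R pdir d s j)"
proof -
  define N where "N = real CARD('n)"
  have N: "N \<ge> 1" unfolding N_def by (simp add: Suc_le_eq)
  define lm where "lm j = (1 + (if snd j then 1 else -1) * (N * (w $ fst j - d $ fst j) / s)) / (2 * N)" for j :: "'n \<times> bool"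
  have bnd: "\<bar>N * (w $ i - d $ i) / s\<bar> < 1" for i
  proof -
    have "\<bar>w $ i - d $ i\<bar> \<le> norm (w - d)" using component_le_norm_cart[of "w - d" i] by simp
    then have "\<bar>w $ i - d $ i\<bar> < s / N" using wd by (simp add: N_def)
    then have "N * \<bar>w $ i - d $ i\<bar> < s" using N by (simp add: field_simps)
    moreover have "\<bar>N * (w $ i - d $ i) / s\<bar> = N * \<bar>w $ i - d $ i\<bar> / s" using s N by (simp add: abs_mult abs_divide)
    ultimately show ?thesis using s by (simp add: divide_less_eq)
  qed
  have lmb: "0 \<le> lm j \<and> lm j \<le> 1" for j
  proof -
    define X where "X = N * (w $ fst j - d $ fst j) / s"
    have X: "-1 < X" "X < 1" using bnd[of "fst j"] unfolding X_def abs_less_iff by auto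
    have e: "lm j = (1 + (if snd j then 1 else -1) * X) / (2*N)" by (simp add: lm_def X_def)
    show ?thesis
    proof (cases "snd j")
      case True
      then have "lm j = (1 + X) / (2*N)" using e by simp
      then show ?thesis using X N by (auto simp: divide_le_eq zero_le_divide_iff)
    next
      case False
      then have "lm j = (1 - X) / (2*N)" using e by simp
      then show ?thesis using X N by (auto simp: divide_le_eq zero_le_divide_iff)
    qed
  qed
  have "(\<Sum>j\<in>UNIV. lm j *\<^sub>R pdir d s j) = w"
  proof (subst vec_eq_iff, intro allI)
    fix k
    have "(\<Sum>j\<in>UNIV. lm j *\<^sub>R pdir d s j) $ k = (\<Sum>j\<in>UNIV. lm j * (pdir d s j $ k))"
      by (simp add: sum_component)
    also have "\<dots> = (\<Sum>j\<in>UNIV \<times> UNIV. lm j * (pdir d s j $ k))" by (simp add: UNIV_Times_UNIV)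
    also have "\<dots> = (\<Sum>i\<in>UNIV. \<Sum>b\<in>UNIV. lm (i,b) * (pdir d s (i,b) $ k))"
      by (simp add: sum.cartesian_product)
    also have "\<dots> = (\<Sum>i\<in>UNIV. d $ k / N + (if k = i then w $ i - d $ i else 0))"
    proof (rule sum.cong[OF refl])
      fix i
      have "(\<Sum>b\<in>UNIV. lm (i,b) * (pdir d s (i,b) $ k)) = lm (i,True) * (pdir d s (i,True) $ k) + lm (i,False) * (pdir d s (i,False) $ k)"
        by (simp add: UNIV_bool)
      also have "\<dots> = d $ k / N + (if k = i then w $ i - d $ i else 0)"
        using s N by (auto simp: lm_def pdir_def axis_def field_simps)
      finally show "(\<Sum>b\<in>UNIV. lm (i,b) * (pdir d s (i,b) $ k)) = d $ k / N + (if k = i then w $ i - d $ i else 0)" .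
    qed
    also have "\<dots> = w $ k" using N by (simp add: sum.distrib N_def)
    finally show "(\<Sum>j\<in>UNIV. lm j *\<^sub>R pdir d s j) $ k = w $ k" .
  qed
  then show ?thesis using lmb by metis
qed

lemma CL2:
  fixes c :: "real^'n \<Rightarrow> ereal"
  assumes "clarke_dd c u p < 0" and r0: "r0 > 0" and fin: "\<forall>z\<in>ball u r0. \<bar>c z\<bar> \<noteq> \<infinity>"
  shows "\<exists>r>0. \<exists>t0>0. \<forall>y\<in>ball u r. \<forall>\<tau>. 0<\<tau> \<and> \<tau><t0 \<longrightarrow> c (y + \<tau> *\<^sub>R p) \<le> c y"
proof -
  obtain r1 t1 where r1: "r1 > 0" "t1 > 0" and h: "\<forall>y\<in>ball u r1. \<forall>t. 0<t \<and> t<t1 \<longrightarrow> (c (y + t *\<^sub>R p) - c y) / ereal t < ereal 0"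
    using clarke_unpack[of c u p 0] assms(1) by (auto simp: zero_ereal_def)
  have "\<forall>y\<in>ball u (min r1 r0). \<forall>\<tau>. 0<\<tau> \<and> \<tau><t1 \<longrightarrow> c (y + \<tau> *\<^sub>R p) \<le> c y"
  proof (intro ballI allI impI)
    fix y \<tau> assume y: "y \<in> ball u (min r1 r0)" and t: "0<\<tau> \<and> \<tau><t1"
    have q: "(c (y + \<tau> *\<^sub>R p) - c y) / ereal \<tau> < ereal 0" using h y t by auto
    have "y \<in> ball u r0" using y by simp
    then have "\<bar>c y\<bar> \<noteq> \<infinity>" using bspec[OF fin] by simp
    then obtain b where b: "c y = ereal b" by (cases "c y") auto
    show "c (y + \<tau> *\<^sub>R p) \<le> c y"
    proof (cases "c (y + \<tau> *\<^sub>R p)")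
      case (real a)
      then show ?thesis using q b t by (auto simp: divide_less_0_iff)
    next
      case PInf
      then show ?thesis using q b t by simp
    next
      case MInf
      then show ?thesis by simp
    qed
  qed
  then show ?thesis using r1 r0 by (intro exI[of _ "min r1 r0"]) auto
qed

lemma cint_neg_in:
  assumes "finite Gint" "c_int g Gint z < 0"
  shows "z \<in> Omega_int g Gint"
proof (rule ccontr)
  assume "z \<notin> Omega_int g Gint"
  then obtain l where l: "l \<in> Gint" "\<not> g l z \<le> 0" by (auto simp: Omega_int_def)
  then have "c_int g Gint z = phi_prox g Gint z" by (auto simp: c_int_def)
  also have "\<dots> \<ge> g l z" unfolding phi_prox_def using assms(1) l by (intro Max_ge) auto
  finally show False using l assms(2) by simp
qed

lemma cext_zero: "z \<in> Omega_ext g Gext \<Longrightarrow> c_ext g Gext z = 0"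
  unfolding c_ext_def Omega_ext_def by (intro sum.neutral) (auto simp: max_def power2_eq_square dest: antisym)

lemma cext_nonneg: "0 \<le> c_ext g Gext z"
  unfolding c_ext_def by (intro sum_nonneg ereal_sq_nonneg)

lemma rho_to_zero:
  fixes \<rho> :: "nat \<Rightarrow> real"
  assumes pos: "\<forall>k. \<rho> k > 0" and dec: "\<forall>k. \<rho> (Suc k) \<le> \<rho> k"
    and drop: "\<forall>k\<in>K. \<rho> (Suc k) \<le> \<theta> * \<rho> k" and th: "0 < \<theta>" "\<theta> < 1" and inf: "infinite K"
  shows "\<forall>e>0. \<exists>N. \<forall>k\<ge>N. \<rho> k < e"
proof -
  have ds: "decseq \<rho>" using dec by (simp add: decseq_Suc_iff)
  have key: "\<exists>k. \<rho> k \<le> \<rho> 0 * \<theta> ^ n" for n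
  proof (induction n)
    case 0 show ?case by (auto intro: exI[of _ 0])
  next
    case (Suc n)
    then obtain k where k: "\<rho> k \<le> \<rho> 0 * \<theta> ^ n" by blast
    obtain k' where k': "k' \<ge> k" "k' \<in> K" using inf unfolding infinite_nat_iff_unbounded_le by blast
    have "\<rho> (Suc k') \<le> \<theta> * \<rho> k'" using drop k' by auto
    also have "\<dots> \<le> \<theta> * \<rho> k" using ds k' th by (intro mult_left_mono) (auto simp: decseq_def)
    also have "\<dots> \<le> \<theta> * (\<rho> 0 * \<theta> ^ n)" using k th by (intro mult_left_mono) auto
    finally show ?case by (auto simp: algebra_simps intro!: exI[of _ "Suc k'"])
  qed
  show ?thesis
  proof (intro allI impI)
    fix e :: real assume e: "e > 0"
    obtain n where n: "\<theta> ^ n < e / \<rho> 0" using real_arch_pow_inv[of "e / \<rho> 0" \<theta>] e pos th by auto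
    obtain k where k: "\<rho> k \<le> \<rho> 0 * \<theta> ^ n" using key by blast
    have "\<rho> 0 * \<theta> ^ n < e" using n pos by (simp add: field_simps)
    then have "\<forall>k'\<ge>k. \<rho> k' < e" using k ds by (auto simp: decseq_def intro: order.strict_trans1 order.trans)
    then show "\<exists>N. \<forall>k\<ge>N. \<rho> k < e" by blast
  qed
qed

lemma merit_fin:
  assumes "merit f g Gint Gext \<rho> y < \<infinity>" "\<rho> > 0" "\<rho>' > 0" "f y \<noteq> -\<infinity>"
  shows "merit f g Gint Gext \<rho>' y < \<infinity>"
proof -
  have ci: "c_int g Gint y < 0" using assms(1) by (auto simp: merit_def split: if_splits)
  have ce: "0 \<le> c_ext g Gext y" by (rule cext_nonneg)
  have "f y \<noteq> \<infinity> \<and> c_ext g Gext y \<noteq> \<infinity>"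
  proof (cases "f y"; cases "c_ext g Gext y")
  qed (use assms ci ce in \<open>auto simp: merit_def\<close>)
  then show ?thesis using ci ce assms(3,4) by (cases "f y"; cases "c_ext g Gext y") (auto simp: merit_def)
qed


lemma run_facts:
  assumes "mads_pip_run f g Gint Gext \<theta>\<rho> \<theta>\<Delta> \<beta> x \<Delta> \<rho> S D"
  shows "\<rho> 0 > 0" "0<\<theta>\<rho>" "\<theta>\<rho><1" "0<\<theta>\<Delta>" "\<beta> > 1"
    "merit f g Gint Gext (\<rho> 0) (x 0) < \<infinity>"
    "\<forall>k. \<rho> (Suc k) = \<rho> k \<or> \<rho> (Suc k) = \<theta>\<rho> * \<rho> k"
    "\<forall>k. (merit f g Gint Gext (\<rho> k) (x (Suc k)) < merit f g Gint Gext (\<rho> k) (x k) \<and> \<rho> (Suc k) = \<rho> k) \<or> x (Suc k) = x k"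
    "\<forall>k\<in>K_rho \<rho>. (\<forall>d\<in>D k. \<not> merit f g Gint Gext (\<rho> k) (x k + d) < merit f g Gint Gext (\<rho> k) (x k)) \<and>
        (\<forall>d\<in>D k. x k + d \<in> frame x \<Delta> k) \<and> 0 \<notin> D k \<and> \<Delta> (Suc k) = \<theta>\<Delta> * \<Delta> k \<and>
        \<rho> (Suc k) = \<theta>\<rho> * \<rho> k \<and> \<Delta> (Suc k) \<le> \<rho> k powr \<beta>"
proof -
  note A = assms[unfolded mads_pip_run_def Let_def]
  show "\<rho> 0 > 0" "0<\<theta>\<rho>" "\<theta>\<rho><1" "0<\<theta>\<Delta>" "\<beta> > 1" "merit f g Gint Gext (\<rho> 0) (x 0) < \<infinity>"
    using A by auto
  show "\<forall>k. \<rho> (Suc k) = \<rho> k \<or> \<rho> (Suc k) = \<theta>\<rho> * \<rho> k"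
  proof
    fix k from A have B: "finite (S k) \<and> S k \<subseteq> mesh x \<Delta> k \<and> (if \<exists>s\<in>S k. merit f g Gint Gext (\<rho> k) s < merit f g Gint Gext (\<rho> k) (x k) then
           x (Suc k) \<in> S k \<and> merit f g Gint Gext (\<rho> k) (x (Suc k)) < merit f g Gint Gext (\<rho> k) (x k) \<and>
           \<Delta> (Suc k) = \<Delta> k / \<theta>\<Delta> \<and> \<rho> (Suc k) = \<rho> k
         else
           finite (D k) \<and> 0 \<notin> D k \<and> (\<forall>d\<in>D k. x k + d \<in> frame x \<Delta> k) \<and>
           (if \<exists>d\<in>D k. merit f g Gint Gext (\<rho> k) (x k + d) < merit f g Gint Gext (\<rho> k) (x k) then
              (\<exists>d\<in>D k. merit f g Gint Gext (\<rho> k) (x k + d) < merit f g Gint Gext (\<rho> k) (x k) \<and> x (Suc k) = x k + d) \<and>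
              \<Delta> (Suc k) = \<Delta> k / \<theta>\<Delta> \<and> \<rho> (Suc k) = \<rho> k
            else
              x (Suc k) = x k \<and> \<Delta> (Suc k) = \<theta>\<Delta> * \<Delta> k \<and>
              \<rho> (Suc k) = (if ereal (\<Delta> (Suc k)) \<le> min (ereal (\<rho> k powr \<beta>)) (phi_prox_sq g Gint (x k))
                            then \<theta>\<rho> * \<rho> k else \<rho> k)))" by blast
    then show "\<rho> (Suc k) = \<rho> k \<or> \<rho> (Suc k) = \<theta>\<rho> * \<rho> k" by (auto split: if_splits)
  qed
  show "\<forall>k. (merit f g Gint Gext (\<rho> k) (x (Suc k)) < merit f g Gint Gext (\<rho> k) (x k) \<and> \<rho> (Suc k) = \<rho> k) \<or> x (Suc k) = x k"
  proof
    fix k from A have B: "(if \<exists>s\<in>S k. merit f g Gint Gext (\<rho> k) s < merit f g Gint Gext (\<rho> k) (x k) then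
           x (Suc k) \<in> S k \<and> merit f g Gint Gext (\<rho> k) (x (Suc k)) < merit f g Gint Gext (\<rho> k) (x k) \<and>
           \<Delta> (Suc k) = \<Delta> k / \<theta>\<Delta> \<and> \<rho> (Suc k) = \<rho> k
         else
           finite (D k) \<and> 0 \<notin> D k \<and> (\<forall>d\<in>D k. x k + d \<in> frame x \<Delta> k) \<and>
           (if \<exists>d\<in>D k. merit f g Gint Gext (\<rho> k) (x k + d) < merit f g Gint Gext (\<rho> k) (x k) then
              (\<exists>d\<in>D k. merit f g Gint Gext (\<rho> k) (x k + d) < merit f g Gint Gext (\<rho> k) (x k) \<and> x (Suc k) = x k + d) \<and>
              \<Delta> (Suc k) = \<Delta> k / \<theta>\<Delta> \<and> \<rho> (Suc k) = \<rho> k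
            else
              x (Suc k) = x k \<and> \<Delta> (Suc k) = \<theta>\<Delta> * \<Delta> k \<and>
              \<rho> (Suc k) = (if ereal (\<Delta> (Suc k)) \<le> min (ereal (\<rho> k powr \<beta>)) (phi_prox_sq g Gint (x k))
                            then \<theta>\<rho> * \<rho> k else \<rho> k)))" by blast
    then show "(merit f g Gint Gext (\<rho> k) (x (Suc k)) < merit f g Gint Gext (\<rho> k) (x k) \<and> \<rho> (Suc k) = \<rho> k) \<or> x (Suc k) = x k"
      by (auto split: if_splits)
  qed
  show "\<forall>k\<in>K_rho \<rho>. (\<forall>d\<in>D k. \<not> merit f g Gint Gext (\<rho> k) (x k + d) < merit f g Gint Gext (\<rho> k) (x k)) \<and>
        (\<forall>d\<in>D k. x k + d \<in> frame x \<Delta> k) \<and> 0 \<notin> D k \<and> \<Delta> (Suc k) = \<theta>\<Delta> * \<Delta> k \<and>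
        \<rho> (Suc k) = \<theta>\<rho> * \<rho> k \<and> \<Delta> (Suc k) \<le> \<rho> k powr \<beta>"
  proof
    fix k assume k: "k \<in> K_rho \<rho>"
    then have lt: "\<rho> (Suc k) < \<rho> k" by (simp add: K_rho_def)
    from A have B: "(if \<exists>s\<in>S k. merit f g Gint Gext (\<rho> k) s < merit f g Gint Gext (\<rho> k) (x k) then
           x (Suc k) \<in> S k \<and> merit f g Gint Gext (\<rho> k) (x (Suc k)) < merit f g Gint Gext (\<rho> k) (x k) \<and>
           \<Delta> (Suc k) = \<Delta> k / \<theta>\<Delta> \<and> \<rho> (Suc k) = \<rho> k
         else
           finite (D k) \<and> 0 \<notin> D k \<and> (\<forall>d\<in>D k. x k + d \<in> frame x \<Delta> k) \<and>
           (if \<exists>d\<in>D k. merit f g Gint Gext (\<rho> k) (x k + d) < merit f g Gint Gext (\<rho> k) (x k) then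
              (\<exists>d\<in>D k. merit f g Gint Gext (\<rho> k) (x k + d) < merit f g Gint Gext (\<rho> k) (x k) \<and> x (Suc k) = x k + d) \<and>
              \<Delta> (Suc k) = \<Delta> k / \<theta>\<Delta> \<and> \<rho> (Suc k) = \<rho> k
            else
              x (Suc k) = x k \<and> \<Delta> (Suc k) = \<theta>\<Delta> * \<Delta> k \<and>
              \<rho> (Suc k) = (if ereal (\<Delta> (Suc k)) \<le> min (ereal (\<rho> k powr \<beta>)) (phi_prox_sq g Gint (x k))
                            then \<theta>\<rho> * \<rho> k else \<rho> k)))" by blast
    then show "(\<forall>d\<in>D k. \<not> merit f g Gint Gext (\<rho> k) (x k + d) < merit f g Gint Gext (\<rho> k) (x k)) \<and>
        (\<forall>d\<in>D k. x k + d \<in> frame x \<Delta> k) \<and> 0 \<notin> D k \<and> \<Delta> (Suc k) = \<theta>\<Delta> * \<Delta> k \<and>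
        \<rho> (Suc k) = \<theta>\<rho> * \<rho> k \<and> \<Delta> (Suc k) \<le> \<rho> k powr \<beta>"
      using lt by (auto split: if_splits)
  qed
qed


theorem mainTheorem8:
  fixes f :: "real^'n \<Rightarrow> ereal" and g :: "nat \<Rightarrow> real^'n \<Rightarrow> ereal"
    and m :: nat and Gint Gext :: "nat set"
    and \<theta>\<rho> \<theta>\<Delta> \<beta> :: real
    and x :: "nat \<Rightarrow> real^'n" and \<Delta> \<rho> :: "nat \<Rightarrow> real"
    and S D :: "nat \<Rightarrow> (real^'n) set"
    and K :: "nat set" and xbar :: "real^'n"
  assumes f_range: "\<forall>y. f y \<noteq> -\<infinity>"
    and g_range: "\<forall>l y. g l y \<noteq> -\<infinity>"
    and partition: "Gint \<union> Gext = {1..m}" "Gint \<inter> Gext = {}"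
    and assumption1: "\<forall>\<alpha>::real. bounded {y. f y \<le> ereal \<alpha>}"
    and run: "mads_pip_run f g Gint Gext \<theta>\<rho> \<theta>\<Delta> \<beta> x \<Delta> \<rho> S D"
    and endpath: "end_path_subsequence x \<rho> K xbar"
    and f_lip: "lipschitz_near f xbar"
    and dense: "dense_poll D K"
    and scq: "SCQ g Gint Gext xbar"
  shows "\<forall>d\<in>hypertangent (Omega g Gint Gext) xbar. clarke_dd f xbar d \<ge> 0"
proof (intro ballI)
  fix d assume dH: "d \<in> hypertangent (Omega g Gint Gext) xbar"
  show "clarke_dd f xbar d \<ge> 0"
  proof (rule ccontr)
    assume "\<not> clarke_dd f xbar d \<ge> 0"
    then have fneg: "clarke_dd f xbar d < 0" by simp
    have finGint: "finite Gint" using partition(1) by (metis finite_Un finite_atLeastAtMost)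
    have lipI: "lipschitz_near (c_int g Gint) xbar" and lipE: "lipschitz_near (c_ext g Gext) xbar"
      and scqb: "\<forall>d\<in>hypertangent (Omega g Gint Gext) xbar. clarke_dd (c_int g Gint) xbar d < 0"
      and scqc: "\<forall>d\<in>hypertangent (Omega g Gint Gext) xbar. \<exists>\<epsilon>>0.
        \<forall>y\<in>ball xbar \<epsilon> - Omega_ext g Gext. clarke_dd (c_ext g Gext) y d < 0"
      using scq unfolding SCQ_def by auto
    obtain \<epsilon>H where eH: "\<epsilon>H > 0" and hyp: "\<forall>y\<in>Omega g Gint Gext \<inter> ball xbar \<epsilon>H. \<forall>w\<in>ball d \<epsilon>H. \<forall>t. 0 < t \<and> t < \<epsilon>H \<longrightarrow> y + t *\<^sub>R w \<in> Omega g Gint Gext"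
      using dH unfolding hypertangent_def by blast
    define FF where "FF = (\<lambda>z. real_of_ereal (f z))"
    define CI where "CI = (\<lambda>z. real_of_ereal (c_int g Gint z))"
    define CE where "CE = (\<lambda>z. real_of_ereal (c_ext g Gext z))"
    obtain \<epsilon>f Lf where ef: "\<epsilon>f > 0" "Lf \<ge> 0" and lipf: "\<forall>y\<in>ball xbar \<epsilon>f. f y = ereal (FF y) \<and> (\<forall>w\<in>ball xbar \<epsilon>f. \<bar>FF y - FF w\<bar> \<le> Lf * dist y w)"
      using lip_unpack[OF f_lip] unfolding FF_def by blast
    obtain \<epsilon>i Li where ei: "\<epsilon>i > 0" "Li \<ge> 0" and lipi: "\<forall>y\<in>ball xbar \<epsilon>i. c_int g Gint y = ereal (CI y) \<and> (\<forall>w\<in>ball xbar \<epsilon>i. \<bar>CI y - CI w\<bar> \<le> Li * dist y w)"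
      using lip_unpack[OF lipI] unfolding CI_def by blast
    obtain \<epsilon>e Le where ee: "\<epsilon>e > 0" and lipe: "\<forall>y\<in>ball xbar \<epsilon>e. c_ext g Gext y = ereal (CE y)"
      using lip_unpack[OF lipE] unfolding CE_def by blast
    obtain a where a: "a > 0" "clarke_dd (c_int g Gint) xbar d < ereal (-a)"
      using ereal_neg_gap scqb dH by blast
    obtain ri ti where rti: "ri > 0" "ti > 0" and Qi: "\<forall>y\<in>ball xbar ri. \<forall>t. 0<t \<and> t<ti \<longrightarrow> (c_int g Gint (y + t *\<^sub>R d) - c_int g Gint y) / ereal t < ereal (-a)"
      using clarke_unpack[OF a(2)] by blast
    obtain af where af: "af > 0" "clarke_dd f xbar d < ereal (-af)" using ereal_neg_gap fneg by blast
    obtain rf tf where rtf: "rf > 0" "tf > 0" and Qf: "\<forall>y\<in>ball xbar rf. \<forall>t. 0<t \<and> t<tf \<longrightarrow> (f (y + t *\<^sub>R d) - f y) / ereal t < ereal (-af)"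
      using clarke_unpack[OF af(2)] by blast
    have dnz: "d \<noteq> 0"
    proof
      assume "d = 0"
      have "xbar \<in> ball xbar ri" "xbar \<in> ball xbar \<epsilon>i" using rti ei by auto
      then have "(c_int g Gint xbar - c_int g Gint xbar) / ereal (ti/2) < ereal (-a)"
        using Qi \<open>d = 0\<close> rti by auto
      then show False using lipi \<open>xbar \<in> ball xbar \<epsilon>i\<close> a by auto
    qed
    define s where "s = \<epsilon>H / 4"
    have s0: "s > 0" using eH by (simp add: s_def)
    define p where "p = pdir d s"
    have pH: "p j \<in> hypertangent (Omega g Gint Gext) xbar" for j
    proof -
      have "\<forall>y\<in>Omega g Gint Gext \<inter> ball xbar (\<epsilon>H/2). \<forall>w\<in>ball (p j) (\<epsilon>H/2). \<forall>t. 0 < t \<and> t < \<epsilon>H/2 \<longrightarrow> y + t *\<^sub>R w \<in> Omega g Gint Gext"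
      proof (intro ballI allI impI)
        fix y w t assume y: "y \<in> Omega g Gint Gext \<inter> ball xbar (\<epsilon>H/2)" and w: "w \<in> ball (p j) (\<epsilon>H/2)" and t: "0 < t \<and> t < \<epsilon>H/2"
        have "dist d (p j) = s" using pdir_dist[of d s j] s0 by (simp add: p_def dist_norm norm_minus_commute)
        moreover have "dist (p j) w < \<epsilon>H/2" using w by simp
        ultimately have "dist d w < \<epsilon>H" using dist_triangle[of d w "p j"] eH unfolding s_def by linarith
        then show "y + t *\<^sub>R w \<in> Omega g Gint Gext" using hyp y t by auto
      qed
      then show ?thesis unfolding hypertangent_def using eH by (intro CollectI exI[of _ "\<epsilon>H/2"]) auto
    qed
    have "\<forall>j. \<exists>\<epsilon>. \<epsilon> > 0 \<and> (\<forall>y\<in>ball xbar \<epsilon> - Omega_ext g Gext. clarke_dd (c_ext g Gext) y (p j) < 0)"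
      using scqc pH by blast
    then obtain E where E: "\<forall>j. E j > 0 \<and> (\<forall>y\<in>ball xbar (E j) - Omega_ext g Gext. clarke_dd (c_ext g Gext) y (p j) < 0)"
      by metis
    define \<epsilon>c where "\<epsilon>c = Min (range E)"
    have ec: "\<epsilon>c > 0" using E by (simp add: \<epsilon>c_def)
    have ecE: "\<epsilon>c \<le> E j" for j by (simp add: \<epsilon>c_def)
    define R where "R = min (min (min \<epsilon>f \<epsilon>i) (min \<epsilon>e \<epsilon>c)) (min \<epsilon>H ri)"
    have R: "R > 0" "R \<le> \<epsilon>f" "R \<le> \<epsilon>i" "R \<le> \<epsilon>e" "R \<le> \<epsilon>c" "R \<le> \<epsilon>H" "R \<le> ri"
      using ef ei ee ec eH rti by (auto simp: R_def)
    define M where "M = norm d + 1"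
    have M: "M \<ge> 1" "norm d \<le> M" by (auto simp: M_def)
    define NN where "NN = real CARD('n)"
    have NN: "NN \<ge> 1" unfolding NN_def by (simp add: Suc_le_eq)
    define \<eta> where "\<eta> = min (min (s/NN/2) (a/(Li+1))) (min 1 (\<epsilon>H/2))"
    have eta: "\<eta> > 0" "\<eta> < s / NN" "Li * \<eta> \<le> a" "\<eta> \<le> 1" "\<eta> < \<epsilon>H"
    proof -
      show "\<eta> > 0" using s0 NN a ei eH by (simp add: \<eta>_def)
      have "s/NN/2 < s/NN" using s0 NN by (simp add: field_simps)
      moreover have "\<eta> \<le> s/NN/2" by (simp add: \<eta>_def)
      ultimately show "\<eta> < s / NN" by linarith
      show "\<eta> \<le> 1" "\<eta> < \<epsilon>H" using eH by (auto simp: \<eta>_def)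
      have "Li * \<eta> \<le> (Li + 1) * \<eta>" using \<open>\<eta> > 0\<close> by simp
      also have "\<dots> \<le> (Li + 1) * (a / (Li + 1))" using ei by (intro mult_left_mono) (auto simp: \<eta>_def)
      also have "\<dots> = a" using ei by simp
      finally show "Li * \<eta> \<le> a" .
    qed
    define r0 where "r0 = R / 2"
    define T0 where "T0 = min (R / (2*M)) (min ti \<epsilon>H)"
    have T0: "T0 > 0" "T0 * M \<le> R/2" "T0 \<le> ti" "T0 \<le> \<epsilon>H"
    proof -
      show "T0 > 0" using R M rti eH by (simp add: T0_def)
      show "T0 \<le> ti" "T0 \<le> \<epsilon>H" by (auto simp: T0_def)
      have "T0 * M \<le> R / (2*M) * M" using M by (intro mult_right_mono) (auto simp: T0_def)
      also have "\<dots> = R/2" using M by simp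
      finally show "T0 * M \<le> R/2" .
    qed
    have KEY: "\<forall>y w t \<rho>'. dist xbar y < r0 \<longrightarrow> c_int g Gint y < 0 \<longrightarrow> norm (w - d) < \<eta> \<longrightarrow> 0 < t \<longrightarrow> t < T0 \<longrightarrow> 0 < \<rho>' \<longrightarrow>
       \<not> merit f g Gint Gext \<rho>' (y + t *\<^sub>R w) < merit f g Gint Gext \<rho>' y \<longrightarrow>
       FF y \<le> FF (y + t *\<^sub>R w) \<and> dist xbar (y + t *\<^sub>R d) < R \<and> dist xbar (y + t *\<^sub>R w) < R \<and> dist xbar y < R"
    proof (intro allI impI)
      fix y w t \<rho>' assume y: "dist xbar y < r0" and ci: "c_int g Gint y < 0" and wd: "norm (w - d) < \<eta>"
        and t0: "0 < t" and tT: "t < T0" and rp: "0 < \<rho>'"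
        and nm: "\<not> merit f g Gint Gext \<rho>' (y + t *\<^sub>R w) < merit f g Gint Gext \<rho>' y"
      have nw: "norm w \<le> M"
      proof -
        have "norm w \<le> norm d + norm (w - d)" using norm_triangle_ineq[of d "w - d"] by simp
        then show ?thesis using wd eta unfolding M_def by linarith
      qed
      have inR: "dist xbar (y + \<sigma> *\<^sub>R v) < R" if "0 \<le> \<sigma>" "\<sigma> \<le> t" "norm v \<le> M" for \<sigma> v
      proof -
        have "dist xbar (y + \<sigma> *\<^sub>R v) \<le> dist xbar y + dist y (y + \<sigma> *\<^sub>R v)" by (rule dist_triangle)
        also have "dist y (y + \<sigma> *\<^sub>R v) = \<sigma> * norm v" using that by (simp add: dist_norm)
        also have "\<sigma> * norm v \<le> t * M" using that t0 by (intro mult_mono) auto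
        also have "t * M \<le> T0 * M" using tT M by (intro mult_right_mono) auto
        finally show ?thesis using y T0 unfolding r0_def by linarith
      qed
      have yR: "dist xbar y < R" using y R unfolding r0_def by linarith
      have CIdec: "CI (y + \<sigma> *\<^sub>R w) \<le> CI y" if "0 < \<sigma>" "\<sigma> \<le> t" for \<sigma>
      proof -
        have yri: "y \<in> ball xbar ri" using yR R by simp
        have q: "(c_int g Gint (y + \<sigma> *\<^sub>R d) - c_int g Gint y) / ereal \<sigma> < ereal (-a)"
          using Qi yri that tT T0 by auto
        have d1: "dist xbar (y + \<sigma> *\<^sub>R d) < R" using inR[of \<sigma> d] that M by simp
        have w1: "dist xbar (y + \<sigma> *\<^sub>R w) < R" using inR[of \<sigma> w] that nw by simp
        have e1: "c_int g Gint (y + \<sigma> *\<^sub>R d) = ereal (CI (y + \<sigma> *\<^sub>R d))" using lipi d1 R by auto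
        have e2: "c_int g Gint y = ereal (CI y)" using lipi yR R by auto
        have "(CI (y + \<sigma> *\<^sub>R d) - CI y) / \<sigma> < -a" using q e1 e2 that by simp
        then have A1: "CI (y + \<sigma> *\<^sub>R d) - CI y < -a * \<sigma>" using that by (simp add: pos_divide_less_eq)
        have "\<bar>CI (y + \<sigma> *\<^sub>R w) - CI (y + \<sigma> *\<^sub>R d)\<bar> \<le> Li * dist (y + \<sigma> *\<^sub>R w) (y + \<sigma> *\<^sub>R d)"
        proof -
          have m1: "y + \<sigma> *\<^sub>R w \<in> ball xbar \<epsilon>i" using w1 R by simp
          have m2: "y + \<sigma> *\<^sub>R d \<in> ball xbar \<epsilon>i" using d1 R by simp
          show ?thesis using lipi m1 m2 by blast
        qed
        also have "dist (y + \<sigma> *\<^sub>R w) (y + \<sigma> *\<^sub>R d) = \<sigma> * norm (w - d)"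
          using that by (simp add: dist_norm scaleR_diff_right[symmetric])
        also have "Li * (\<sigma> * norm (w - d)) \<le> Li * (\<sigma> * \<eta>)" using wd that ei by (intro mult_left_mono) auto
        also have "Li * (\<sigma> * \<eta>) = \<sigma> * (Li * \<eta>)" by simp
        also have "\<dots> \<le> \<sigma> * a" using eta that by (intro mult_left_mono) auto
        finally show ?thesis using A1 by (simp add: abs_le_iff algebra_simps)
      qed
      have ciy: "c_int g Gint y = ereal (CI y)" using lipi yR R by auto
      have CIy: "CI y < 0" using ci ciy by simp
      have cext_dec: "c_ext g Gext (y + t *\<^sub>R w) \<le> c_ext g Gext y"
      proof (cases "\<exists>\<sigma>\<in>{0..t}. y + \<sigma> *\<^sub>R w \<in> Omega_ext g Gext")
        case True
        then obtain \<sigma> where sg: "\<sigma> \<in> {0..t}" and z0e: "y + \<sigma> *\<^sub>R w \<in> Omega_ext g Gext" by blast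
        define z0 where "z0 = y + \<sigma> *\<^sub>R w"
        have z0R: "dist xbar z0 < R" using inR[of \<sigma> w] sg nw by (simp add: z0_def)
        have "c_int g Gint z0 < 0"
        proof (cases "\<sigma> = 0")
          case True then show ?thesis using ci by (simp add: z0_def)
        next
          case False
          then have "CI z0 \<le> CI y" using CIdec[of \<sigma>] sg by (simp add: z0_def)
          moreover have "c_int g Gint z0 = ereal (CI z0)" using lipi z0R R by auto
          ultimately show ?thesis using CIy by simp
        qed
        then have "z0 \<in> Omega_int g Gint" by (rule cint_neg_in[OF finGint])
        then have z0O: "z0 \<in> Omega g Gint Gext" using z0e by (simp add: Omega_def z0_def)
        have "y + t *\<^sub>R w \<in> Omega_ext g Gext"
        proof (cases "\<sigma> = t")
          case True then show ?thesis using z0e by simp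
        next
          case False
          then have tp: "0 < t - \<sigma>" "t - \<sigma> < \<epsilon>H" using sg tT T0 by auto
          have "w \<in> ball d \<epsilon>H" using wd eta by (simp add: dist_norm norm_minus_commute)
          moreover have "z0 \<in> Omega g Gint Gext \<inter> ball xbar \<epsilon>H" using z0O z0R R by simp
          ultimately have "z0 + (t - \<sigma>) *\<^sub>R w \<in> Omega g Gint Gext" using hyp tp by blast
          moreover have "z0 + (t - \<sigma>) *\<^sub>R w = y + t *\<^sub>R w" by (simp add: z0_def algebra_simps)
          ultimately show ?thesis by (simp add: Omega_def)
        qed
        then show ?thesis using cext_zero cext_nonneg by metis
      next
        case False
        have loc: "\<forall>\<sigma>0\<in>{0..t}. \<exists>\<delta>>0. \<forall>a b. a\<in>{0..t} \<longrightarrow> b\<in>{0..t} \<longrightarrow> \<sigma>0 - \<delta> < a \<longrightarrow> a \<le> b \<longrightarrow> b < \<sigma>0 + \<delta> \<longrightarrow>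
                   c_ext g Gext (y + b *\<^sub>R w) \<le> c_ext g Gext (y + a *\<^sub>R w)"
        proof
          fix \<sigma>0 assume s0t: "\<sigma>0 \<in> {0..t}"
          define u where "u = y + \<sigma>0 *\<^sub>R w"
          have uR: "dist xbar u < R" using inR[of \<sigma>0 w] s0t nw by (simp add: u_def)
          have uout: "u \<notin> Omega_ext g Gext" using False s0t by (auto simp: u_def)
          have cl: "clarke_dd (c_ext g Gext) u (p j) < 0" for j
          proof -
            have "u \<in> ball xbar (E j) - Omega_ext g Gext" using uR R ecE[of j] uout by simp
            then show ?thesis using E by blast
          qed
          have fin: "\<forall>z\<in>ball u (R - dist xbar u). \<bar>c_ext g Gext z\<bar> \<noteq> \<infinity>"
          proof
            fix z assume "z \<in> ball u (R - dist xbar u)"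
            then have "dist xbar z < R" using dist_triangle[of xbar z u] by simp
            then have "c_ext g Gext z = ereal (CE z)" using lipe R by auto
            then show "\<bar>c_ext g Gext z\<bar> \<noteq> \<infinity>" by simp
          qed
          have "\<forall>j\<in>UNIV. \<exists>r>0. \<exists>t0>0. \<forall>y\<in>ball u r. \<forall>\<tau>. 0<\<tau> \<and> \<tau><t0 \<longrightarrow> c_ext g Gext (y + \<tau> *\<^sub>R p j) \<le> c_ext g Gext y"
            using CL2[OF cl _ fin] uR by auto
          moreover have fU: "finite (UNIV :: ('n \<times> bool) set)" by simp
          ultimately have "\<exists>r>0. \<exists>\<delta>>0. \<forall>y\<in>ball u r. \<forall>h. 0<h \<and> h<\<delta> \<longrightarrow> (\<forall>lm. (\<forall>j\<in>UNIV. 0 \<le> lm j \<and> lm j \<le> 1) \<longrightarrow>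
            c_ext g Gext (y + h *\<^sub>R (\<Sum>j\<in>UNIV. lm j *\<^sub>R p j)) \<le> c_ext g Gext y)"
            using LD[of "UNIV :: ('n \<times> bool) set" u "c_ext g Gext" p] by blast
          then obtain ru \<delta>u where ru: "ru > 0" "\<delta>u > 0" and LDh:
            "\<forall>y'\<in>ball u ru. \<forall>h. 0<h \<and> h<\<delta>u \<longrightarrow> (\<forall>lm. (\<forall>j\<in>UNIV. 0 \<le> lm j \<and> lm j \<le> 1) \<longrightarrow>
               c_ext g Gext (y' + h *\<^sub>R (\<Sum>j\<in>UNIV. lm j *\<^sub>R p j)) \<le> c_ext g Gext y')"
            by blast
          have "norm (w - d) < s / real CARD('n)" using wd eta by (simp add: NN_def)
          from decomp[OF s0 this] obtain lm where lm: "\<forall>j. 0 \<le> lm j \<and> lm j \<le> 1"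
            and wsum: "w = (\<Sum>j\<in>UNIV. lm j *\<^sub>R p j)" unfolding p_def by blast
          define \<delta> where "\<delta> = min (ru / (M + 1)) (\<delta>u / 2)"
          have dpos: "\<delta> > 0" using ru M by (simp add: \<delta>_def)
          have dM: "\<delta> * M < ru"
          proof -
            have "\<delta> * M \<le> ru / (M + 1) * M" using M by (intro mult_right_mono) (auto simp: \<delta>_def)
            also have "\<dots> < ru / (M + 1) * (M + 1)" using ru M by (intro mult_strict_left_mono) auto
            also have "\<dots> = ru" using M by simp
            finally show ?thesis .
          qed
          show "\<exists>\<delta>>0. \<forall>a b. a\<in>{0..t} \<longrightarrow> b\<in>{0..t} \<longrightarrow> \<sigma>0 - \<delta> < a \<longrightarrow> a \<le> b \<longrightarrow> b < \<sigma>0 + \<delta> \<longrightarrow>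
                   c_ext g Gext (y + b *\<^sub>R w) \<le> c_ext g Gext (y + a *\<^sub>R w)"
          proof (intro exI[of _ \<delta>] conjI allI impI)
            show "\<delta> > 0" by (rule dpos)
            fix a b assume a: "a \<in> {0..t}" and b: "b \<in> {0..t}" and l1: "\<sigma>0 - \<delta> < a" and ab: "a \<le> b" and l2: "b < \<sigma>0 + \<delta>"
            show "c_ext g Gext (y + b *\<^sub>R w) \<le> c_ext g Gext (y + a *\<^sub>R w)"
            proof (cases "a = b")
              case True then show ?thesis by simp
            next
              case False
              define h where "h = b - a"
              have h: "0 < h" "h < \<delta>u" using False ab l1 l2 by (auto simp: h_def \<delta>_def)
              have "dist u (y + a *\<^sub>R w) = \<bar>\<sigma>0 - a\<bar> * norm w"
                by (simp add: u_def dist_norm scaleR_diff_left[symmetric])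
              also have "\<dots> \<le> \<delta> * M" using l1 l2 ab nw by (intro mult_mono) auto
              finally have "y + a *\<^sub>R w \<in> ball u ru" using dM by simp
              then have "c_ext g Gext ((y + a *\<^sub>R w) + h *\<^sub>R (\<Sum>j\<in>UNIV. lm j *\<^sub>R p j)) \<le> c_ext g Gext (y + a *\<^sub>R w)"
                using LDh h lm by blast
              moreover have "(y + a *\<^sub>R w) + h *\<^sub>R (\<Sum>j\<in>UNIV. lm j *\<^sub>R p j) = y + b *\<^sub>R w"
                using wsum by (simp add: h_def algebra_simps)
              ultimately show ?thesis by simp
            qed
          qed
        qed
        have "c_ext g Gext (y + t *\<^sub>R w) \<le> c_ext g Gext (y + 0 *\<^sub>R w)"
          using local_mono_global[of t "\<lambda>\<sigma>. c_ext g Gext (y + \<sigma> *\<^sub>R w)"] loc t0 by simp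
        then show ?thesis by simp
      qed
      have twR: "dist xbar (y + t *\<^sub>R w) < R" using inR[of t w] t0 nw by simp
      have tdR: "dist xbar (y + t *\<^sub>R d) < R" using inR[of t d] t0 M by simp
      have ciw: "c_int g Gint (y + t *\<^sub>R w) = ereal (CI (y + t *\<^sub>R w))" using lipi twR R by auto
      have CIw: "CI (y + t *\<^sub>R w) \<le> CI y" using CIdec[of t] t0 by simp
      have fy: "f y = ereal (FF y)" and fw: "f (y + t *\<^sub>R w) = ereal (FF (y + t *\<^sub>R w))"
        using lipf yR twR R by auto
      have ey: "c_ext g Gext y = ereal (CE y)" and ew: "c_ext g Gext (y + t *\<^sub>R w) = ereal (CE (y + t *\<^sub>R w))"
        using lipe yR twR R by auto
      have CEw: "CE (y + t *\<^sub>R w) \<le> CE y" using cext_dec ey ew by simp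
      have my: "merit f g Gint Gext \<rho>' y = ereal (FF y - \<rho>' * ln (- CI y) + CE y / \<rho>')"
        using ciy CIy fy ey rp by (simp add: merit_def)
      have mw: "merit f g Gint Gext \<rho>' (y + t *\<^sub>R w) = ereal (FF (y + t *\<^sub>R w) - \<rho>' * ln (- CI (y + t *\<^sub>R w)) + CE (y + t *\<^sub>R w) / \<rho>')"
        using ciw CIw CIy fw ew rp by (simp add: merit_def)
      have ineq: "FF y - \<rho>' * ln (- CI y) + CE y / \<rho>' \<le> FF (y + t *\<^sub>R w) - \<rho>' * ln (- CI (y + t *\<^sub>R w)) + CE (y + t *\<^sub>R w) / \<rho>'"
        using nm my mw by simp
      have "ln (- CI y) \<le> ln (- CI (y + t *\<^sub>R w))" using CIy CIw by simp
      then have l: "\<rho>' * ln (- CI y) \<le> \<rho>' * ln (- CI (y + t *\<^sub>R w))" using rp by (intro mult_left_mono) auto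
      have c: "CE (y + t *\<^sub>R w) / \<rho>' \<le> CE y / \<rho>'" using CEw rp by (intro divide_right_mono) auto
      have "FF y \<le> FF (y + t *\<^sub>R w)" using ineq l c by linarith
      then show "FF y \<le> FF (y + t *\<^sub>R w) \<and> dist xbar (y + t *\<^sub>R d) < R \<and> dist xbar (y + t *\<^sub>R w) < R \<and> dist xbar y < R"
        using tdR twR yR by simp
    qed
    have rf0: "\<rho> 0 > 0" and thr: "0 < \<theta>\<rho>" "\<theta>\<rho> < 1" and thD: "0 < \<theta>\<Delta>" and beta: "\<beta> > 1"
      and m0: "merit f g Gint Gext (\<rho> 0) (x 0) < \<infinity>"
      and rstep: "\<forall>k. \<rho> (Suc k) = \<rho> k \<or> \<rho> (Suc k) = \<theta>\<rho> * \<rho> k"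
      and succ: "\<forall>k. (merit f g Gint Gext (\<rho> k) (x (Suc k)) < merit f g Gint Gext (\<rho> k) (x k) \<and> \<rho> (Suc k) = \<rho> k) \<or> x (Suc k) = x k"
      and Kfacts: "\<forall>k\<in>K_rho \<rho>. (\<forall>d\<in>D k. \<not> merit f g Gint Gext (\<rho> k) (x k + d) < merit f g Gint Gext (\<rho> k) (x k)) \<and>
        (\<forall>d\<in>D k. x k + d \<in> frame x \<Delta> k) \<and> 0 \<notin> D k \<and> \<Delta> (Suc k) = \<theta>\<Delta> * \<Delta> k \<and>
        \<rho> (Suc k) = \<theta>\<rho> * \<rho> k \<and> \<Delta> (Suc k) \<le> \<rho> k powr \<beta>"
      using run_facts[OF run] by auto
    have rpos: "\<rho> k > 0" for k
    proof (induction k)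
      case 0 show ?case by (rule rf0)
    next
      case (Suc k) then show ?case using rstep[rule_format, of k] thr by auto
    qed
    have rdec: "\<forall>k. \<rho> (Suc k) \<le> \<rho> k"
    proof
      fix k have "\<theta>\<rho> * \<rho> k \<le> 1 * \<rho> k" using thr rpos[of k] by (intro mult_right_mono) auto
      then show "\<rho> (Suc k) \<le> \<rho> k" using rstep[rule_format, of k] by auto
    qed
    have Ksub: "K \<subseteq> K_rho \<rho>" and Kinf: "infinite K" and Kconv: "conv_along x K xbar"
      using endpath unfolding end_path_subsequence_def by auto
    have rdrop: "\<forall>k\<in>K. \<rho> (Suc k) \<le> \<theta>\<rho> * \<rho> k" using Kfacts Ksub by auto
    have rz: "\<forall>e>0. \<exists>N. \<forall>k\<ge>N. \<rho> k < e"
      using rho_to_zero[OF _ rdec rdrop thr Kinf] rpos by blast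
    have mInv: "merit f g Gint Gext (\<rho> k) (x k) < \<infinity>" for k
    proof (induction k)
      case 0 show ?case by (rule m0)
    next
      case (Suc k)
      show ?case
      proof (cases "merit f g Gint Gext (\<rho> k) (x (Suc k)) < merit f g Gint Gext (\<rho> k) (x k) \<and> \<rho> (Suc k) = \<rho> k")
        case True then show ?thesis using Suc by auto
      next
        case False
        then have "x (Suc k) = x k" using succ by blast
        then show ?thesis using merit_fin[OF Suc rpos[of k] rpos[of "Suc k"]] f_range by simp
      qed
    qed
    have cineg: "c_int g Gint (x k) < 0" for k
      using mInv[of k] by (auto simp: merit_def split: if_splits)
    define dbar where "dbar = (1 / norm d) *\<^sub>R d"
    have ndpos: "norm d > 0" using dnz by simp
    have "norm dbar = 1" using ndpos by (simp add: dbar_def)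
    then obtain Kd dk where Kd: "Kd \<subseteq> K" "infinite Kd" "\<forall>k\<in>Kd. dk k \<in> D k"
      and dconv: "conv_along (\<lambda>k. dk k /\<^sub>R norm (dk k)) Kd dbar"
      using dense unfolding dense_poll_def by blast
    define e1 where "e1 = min r0 rf"
    define e2 where "e2 = min \<eta> (af / (Lf + 1)) / norm d"
    define e3 where "e3 = min 1 (\<theta>\<Delta> * norm d * min T0 tf)"
    have e1p: "e1 > 0" using R rtf by (simp add: e1_def r0_def)
    have e2p: "e2 > 0" using eta af ef ndpos by (simp add: e2_def)
    have e3p: "e3 > 0" using thD ndpos T0 rtf by (simp add: e3_def)
    obtain N1 where N1: "\<forall>k\<in>K. k \<ge> N1 \<longrightarrow> dist (x k) xbar < e1" using Kconv e1p unfolding conv_along_def by blast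
    obtain N2 where N2: "\<forall>k\<in>Kd. k \<ge> N2 \<longrightarrow> dist (dk k /\<^sub>R norm (dk k)) dbar < e2" using dconv e2p unfolding conv_along_def by blast
    obtain N3 where N3: "\<forall>k\<ge>N3. \<rho> k < e3" using rz e3p by blast
    obtain k where k: "k \<in> Kd" "k \<ge> max N1 (max N2 N3)" using Kd(2) unfolding infinite_nat_iff_unbounded_le by blast
    have kK: "k \<in> K" using k Kd by auto
    have kR: "k \<in> K_rho \<rho>" using kK Ksub by auto
    have xk: "dist (x k) xbar < e1" using N1 kK k by auto
    have dk2: "dist (dk k /\<^sub>R norm (dk k)) dbar < e2" using N2 k by auto
    have rk: "\<rho> k < e3" using N3 k by auto
    have dkD: "dk k \<in> D k" using Kd k by auto
    have poll: "\<not> merit f g Gint Gext (\<rho> k) (x k + dk k) < merit f g Gint Gext (\<rho> k) (x k)"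
      using Kfacts kR dkD by blast
    have dk0: "dk k \<noteq> 0" using Kfacts kR dkD by metis
    have fr: "x k + dk k \<in> frame x \<Delta> k" using Kfacts kR dkD by blast
    have DS: "\<Delta> (Suc k) = \<theta>\<Delta> * \<Delta> k" "\<Delta> (Suc k) \<le> \<rho> k powr \<beta>" using Kfacts kR by auto
    define nd where "nd = norm (dk k)"
    have ndp: "nd > 0" using dk0 by (simp add: nd_def)
    have ndD: "nd \<le> \<Delta> k" using fr by (simp add: frame_def nd_def)
    have rk1: "\<rho> k \<le> 1" using rk by (simp add: e3_def)
    have "\<rho> k powr \<beta> \<le> \<rho> k powr 1" using powr_mono'[of 1 \<beta> "\<rho> k"] beta rk1 rpos[of k] by simp
    then have "\<theta>\<Delta> * \<Delta> k \<le> \<rho> k" using DS rpos[of k] by simp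
    also have "\<rho> k < \<theta>\<Delta> * (norm d * min T0 tf)" using rk by (simp add: e3_def)
    finally have "\<Delta> k < norm d * min T0 tf" using thD by simp
    then have "nd < norm d * min T0 tf" using ndD by simp
    define t where "t = nd / norm d"
    have tp: "t > 0" using ndp ndpos by (simp add: t_def)
    have "norm d * min T0 tf \<le> norm d * T0" "norm d * min T0 tf \<le> norm d * tf"
      using ndpos by (intro mult_left_mono; simp)+
    then have "nd < norm d * T0" "nd < norm d * tf" using \<open>nd < norm d * min T0 tf\<close> by linarith+
    then have tlt: "t < T0" "t < tf" using ndpos by (auto simp: t_def pos_divide_less_eq mult.commute)
    define w where "w = (norm d / nd) *\<^sub>R dk k"
    have tw: "t *\<^sub>R w = dk k" using ndp ndpos by (simp add: t_def w_def)
    have "w - d = norm d *\<^sub>R (dk k /\<^sub>R nd - dbar)" using ndpos ndp by (simp add: w_def dbar_def algebra_simps divide_inverse)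
    then have "norm (w - d) = norm d * dist (dk k /\<^sub>R norm (dk k)) dbar" by (simp add: dist_norm nd_def)
    also have "\<dots> < norm d * e2" using dk2 ndpos by simp
    also have "\<dots> = min \<eta> (af / (Lf + 1))" using ndpos by (simp add: e2_def)
    finally have wd: "norm (w - d) < min \<eta> (af / (Lf + 1))" .
    have "FF (x k) \<le> FF (x k + t *\<^sub>R w) \<and> dist xbar (x k + t *\<^sub>R d) < R \<and> dist xbar (x k + t *\<^sub>R w) < R \<and> dist xbar (x k) < R"
      using KEY[rule_format, of "x k" w t "\<rho> k"] xk cineg[of k] wd tp tlt rpos[of k] poll tw
      by (simp add: e1_def dist_commute)
    then have FFle: "FF (x k) \<le> FF (x k + t *\<^sub>R w)" and dR: "dist xbar (x k + t *\<^sub>R d) < R"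
      and wR: "dist xbar (x k + t *\<^sub>R w) < R" and xR: "dist xbar (x k) < R" by auto
    have "x k \<in> ball xbar rf" using xk by (simp add: e1_def dist_commute)
    then have q: "(f (x k + t *\<^sub>R d) - f (x k)) / ereal t < ereal (-af)" using Qf tp tlt by blast
    have m1: "x k + t *\<^sub>R d \<in> ball xbar \<epsilon>f" "x k + t *\<^sub>R w \<in> ball xbar \<epsilon>f" "x k \<in> ball xbar \<epsilon>f"
      using dR wR xR R by auto
    have "f (x k + t *\<^sub>R d) = ereal (FF (x k + t *\<^sub>R d))" "f (x k) = ereal (FF (x k))" using lipf m1 by auto
    then have "(FF (x k + t *\<^sub>R d) - FF (x k)) / t < -af" using q tp by simp
    then have A1: "FF (x k + t *\<^sub>R d) - FF (x k) < -af * t" using tp by (simp add: pos_divide_less_eq)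
    have "\<bar>FF (x k + t *\<^sub>R d) - FF (x k + t *\<^sub>R w)\<bar> \<le> Lf * dist (x k + t *\<^sub>R d) (x k + t *\<^sub>R w)"
      using lipf m1 by blast
    also have "dist (x k + t *\<^sub>R d) (x k + t *\<^sub>R w) = t * norm (w - d)"
      using tp by (simp add: dist_norm scaleR_diff_right[symmetric] norm_minus_commute)
    finally have A2: "\<bar>FF (x k + t *\<^sub>R d) - FF (x k + t *\<^sub>R w)\<bar> \<le> Lf * (t * norm (w - d))" .
    have "Lf * norm (w - d) \<le> (Lf + 1) * norm (w - d)" by (intro mult_right_mono) auto
    also have "\<dots> < (Lf + 1) * (af / (Lf + 1))" using wd ef by (intro mult_strict_left_mono) auto
    also have "\<dots> = af" using ef by simp
    finally have "Lf * norm (w - d) < af" .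
    then have "t * (Lf * norm (w - d)) < t * af" using tp by simp
    then show False using A1 A2 FFle by (simp add: abs_le_iff algebra_simps)
  qed
qed

end
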